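(* Let $K=\mathbb{Z}/3$ and let $G=\mathcal{C}_{2\ell}$ be a cycle of length $s=2\ell$ ($\ell\ge2$). Then $$\dim_K C_X(d)=\begin{cases}2^{s-2}, & \text{if } d\ge \ell-1,\\[2pt] \sum_{i\ge0}\binom{s}{d-2i}, & \text{if } 0\le d\le \ell-2,\end{cases}$$ where $\binom{s}{k}=0$ for $k<0$.
   Context: Let $G$ have vertex set $\{1,\dots,n\}$ and edges $e_1,\dots,e_s$, identified with variables of $S=K[t_1,\dots,t_s]$, $K$ a finite field. Let $X\subseteq\mathbb{P}^{s-1}$ be the image of the projective torus $\{(x_1:\dots:x_n): x_i\neq0\}\subseteq\mathbb{P}^{n-1}$ under the map whose $k$-th coordinate is $x_ix_j$ when $e_k=\{i,j\}$. Order $X=\{P_1,\dots,P_m\}$. For $d\ge0$, $C_X(d)\subseteq K^m$ is the image of the space $S_d$ of degree-$d$ forms under $f\mapsto \big(f(P_1)/t_1^d(P_1),\dots,f(P_m)/t_1^d(P_m)\big)$. *)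

theory Defs
  imports Complex_Main "HOL-Library.Function_Algebras"
begin

(* A graph G on vertices {1..n} with edges e_1..e_s is given by a function
   e :: nat => nat * nat, where e k = (i, j) is the edge {i,j} (for 1 <= k <= s).
   Points of K^N are functions nat => K (coordinates indexed from 1). *)

definition cycle_edge :: "nat \<Rightarrow> nat \<Rightarrow> nat \<times> nat" where
  "cycle_edge s k = (k, if k = s then 1 else k + 1)"

(* affine representatives of the projective torus in P^{n-1} *)
definition torus :: "nat \<Rightarrow> (nat \<Rightarrow> 'k::field) set" where
  "torus n = {x. (\<forall>i\<in>{1..n}. x i \<noteq> 0) \<and> (\<forall>i. i \<notin> {1..n} \<longrightarrow> x i = 0)}"

definition param_pt :: "(nat \<Rightarrow> nat \<times> nat) \<Rightarrow> nat \<Rightarrow> (nat \<Rightarrow> 'k::field) \<Rightarrow> (nat \<Rightarrow> 'k)" where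
  "param_pt e s x = (\<lambda>k. if k \<in> {1..s} then x (fst (e k)) * x (snd (e k)) else 0)"

definition proj_class :: "(nat \<Rightarrow> 'k::field) \<Rightarrow> (nat \<Rightarrow> 'k) set" where
  "proj_class v = {(\<lambda>k. c * v k) | c. c \<noteq> 0}"

(* X \<subseteq> P^{s-1}: image of the projective torus of P^{n-1} *)
definition projX :: "nat \<Rightarrow> nat \<Rightarrow> (nat \<Rightarrow> nat \<times> nat) \<Rightarrow> (nat \<Rightarrow> 'k::field) set set" where
  "projX n s e = proj_class ` (param_pt e s ` torus n)"

(* exponent vectors of monomials of degree d in t_1..t_s *)
definition monomials :: "nat \<Rightarrow> nat \<Rightarrow> (nat \<Rightarrow> nat) set" where
  "monomials s d = {\<alpha>. (\<forall>k. k \<notin> {1..s} \<longrightarrow> \<alpha> k = 0) \<and> (\<Sum>k=1..s. \<alpha> k) = d}"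

(* forms of degree d in S = K[t_1..t_s], given by their coefficients *)
definition forms :: "nat \<Rightarrow> nat \<Rightarrow> ((nat \<Rightarrow> nat) \<Rightarrow> 'k::field) set" where
  "forms s d = {c. \<forall>\<alpha>. \<alpha> \<notin> monomials s d \<longrightarrow> c \<alpha> = 0}"

definition eval_form :: "nat \<Rightarrow> nat \<Rightarrow> ((nat \<Rightarrow> nat) \<Rightarrow> 'k::field) \<Rightarrow> (nat \<Rightarrow> 'k) \<Rightarrow> 'k" where
  "eval_form s d c p = (\<Sum>\<alpha>\<in>monomials s d. c \<alpha> * (\<Prod>k=1..s. p k ^ \<alpha> k))"

definition rep :: "(nat \<Rightarrow> 'k) set \<Rightarrow> (nat \<Rightarrow> 'k)" where
  "rep P = (SOME p. p \<in> P)"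

(* C_X(d): the image of S_d under f |-> (f(P)/t_1^d(P))_{P \<in> X}; a codeword is
   represented as a function on X (extended by 0 outside X), i.e. an element of K^X \<cong> K^m *)
definition code :: "nat \<Rightarrow> nat \<Rightarrow> (nat \<Rightarrow> nat \<times> nat) \<Rightarrow> nat \<Rightarrow> ((nat \<Rightarrow> 'k::field) set \<Rightarrow> 'k) set" where
  "code n s e d = {(\<lambda>P. if P \<in> projX n s e
                         then eval_form s d c (rep P) / (rep P 1) ^ d else 0) | c. c \<in> forms s d}"

definition dimK :: "('a \<Rightarrow> 'k::field) set \<Rightarrow> nat" where
  "dimK V = vector_space.dim (\<lambda>(a::'k) f. (\<lambda>x. a * f x)) V"

end

theory Submission
  imports Defs
begin

lemma f3_one_neq: assumes "card (UNIV :: 'k::{field,finite} set) = 3" shows "(1::'k) \<noteq> -1"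
proof
  assume h: "(1::'k) = -1"
  obtain a :: 'k where a: "a \<notin> {0,1}"
  proof -
    have "{0,1::'k} \<noteq> UNIV" using assms by (metis card.empty card_insert_if finite.emptyI finite.insertI insert_absorb insert_not_empty numeral_3_eq_3 numeral_eq_Suc pred_numeral_simps(1) semiring_norm(26) semiring_norm(27) Suc_inject Zero_not_Suc)
    then show ?thesis using that by blast
  qed
  have "a + 1 \<notin> {0,1,a}" using a h by (auto simp: add_eq_0_iff2)
  hence "card {0,1,a,a+1::'k} = 4" using a by auto
  moreover have "card {0,1,a,a+1::'k} \<le> card (UNIV::'k set)" by (rule card_mono) auto
  ultimately show False using assms by simp
qed

lemma f3_cases: assumes "card (UNIV :: 'k::{field,finite} set) = 3" "(x::'k) \<noteq> 0"
  shows "x = 1 \<or> x = -1"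
proof -
  have d: "(1::'k) \<noteq> -1" using f3_one_neq assms(1) by blast
  have "card {0,1,-1::'k} = 3" using d by auto
  hence "{0,1,-1::'k} = UNIV" using assms(1) by (metis card_subset_eq finite subset_UNIV)
  thus ?thesis using assms(2) by auto
qed

lemma f3_sq: assumes "card (UNIV :: 'k::{field,finite} set) = 3" "(x::'k) \<noteq> 0"
  shows "x * x = 1"
  using f3_cases[OF assms] by auto

lemma f3_two: assumes "card (UNIV :: 'k::{field,finite} set) = 3" shows "(2::'k) \<noteq> 0"
  using f3_one_neq[OF assms] by (metis add_eq_0_iff2 one_add_one)

lemma cube_indep:
  fixes c :: "nat set \<Rightarrow> 'k::field"
  assumes "finite I" and two: "(2::'k) \<noteq> 0"
    and "\<And>w. (\<forall>k\<in>I. w k = 1 \<or> w k = -1) \<Longrightarrow> (\<Sum>T\<in>Pow I. c T * (\<Prod>k\<in>T. w k)) = 0"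
    and "T \<in> Pow I"
  shows "c T = 0"
  using assms(1,3,4)
proof (induction I arbitrary: c T rule: finite_induct)
  case empty
  then show ?case by (auto dest: spec[of _ "\<lambda>_. 1"])
next
  case (insert a I)
  define g where "g T = c T" for T
  define h where "h T = c (insert a T)" for T
  have inj: "inj_on (insert a) (Pow I)" using insert(2) by (auto simp: inj_on_def)
  have disj: "Pow I \<inter> insert a ` Pow I = {}" using insert(2) by auto
  have split: "(\<Sum>T\<in>Pow (insert a I). c T * (\<Prod>k\<in>T. w k)) =
     (\<Sum>T\<in>Pow I. g T * (\<Prod>k\<in>T. w k)) + w a * (\<Sum>T\<in>Pow I. h T * (\<Prod>k\<in>T. w k))" for w
  proof -
    have "(\<Sum>T\<in>Pow (insert a I). c T * (\<Prod>k\<in>T. w k)) =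
       (\<Sum>T\<in>Pow I. c T * (\<Prod>k\<in>T. w k)) + (\<Sum>T\<in>insert a ` Pow I. c T * (\<Prod>k\<in>T. w k))"
      unfolding Pow_insert using disj insert(1) by (intro sum.union_disjoint) auto
    also have "(\<Sum>T\<in>insert a ` Pow I. c T * (\<Prod>k\<in>T. w k)) = (\<Sum>T\<in>Pow I. c (insert a T) * (\<Prod>k\<in>insert a T. w k))"
      using inj by (simp add: sum.reindex)
    also have "\<dots> = w a * (\<Sum>T\<in>Pow I. h T * (\<Prod>k\<in>T. w k))"
      unfolding sum_distrib_left h_def
    proof (rule sum.cong[OF refl])
      fix T assume "T \<in> Pow I"
      hence "finite T" "a \<notin> T" using insert(1,2) finite_subset by auto
      thus "c (insert a T) * prod w (insert a T) = w a * (c (insert a T) * prod w T)" by simp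
    qed
    finally show ?thesis unfolding g_def .
  qed
  have upd: "(\<Prod>k\<in>T. (w(a:=v)) k) = (\<Prod>k\<in>T. w k)" if "T \<in> Pow I" for T and w :: "nat \<Rightarrow> 'k" and v
    using that insert(2) by (intro prod.cong) auto
  have updS: "(\<Sum>T\<in>Pow I. f T * (\<Prod>k\<in>T. (w(a:=v)) k)) = (\<Sum>T\<in>Pow I. f T * (\<Prod>k\<in>T. w k))" for f and w :: "nat \<Rightarrow> 'k" and v
    by (rule sum.cong[OF refl]) (simp only: upd)
  have G: "(\<Sum>T\<in>Pow I. g T * (\<Prod>k\<in>T. w k)) = 0" and H: "(\<Sum>T\<in>Pow I. h T * (\<Prod>k\<in>T. w k)) = 0"
    if w: "\<forall>k\<in>I. w k = 1 \<or> w k = -1" for w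
  proof -
    let ?G = "(\<Sum>T\<in>Pow I. g T * (\<Prod>k\<in>T. w k))" and ?H = "(\<Sum>T\<in>Pow I. h T * (\<Prod>k\<in>T. w k))"
    have e1: "?G + 1 * ?H = 0"
    proof -
      have "\<forall>k\<in>insert a I. (w(a:=1)) k = 1 \<or> (w(a:=1)) k = -1" using w by auto
      from insert(4)[OF this] show ?thesis unfolding split updS by simp
    qed
    have e2: "?G + (-1) * ?H = 0"
    proof -
      have "\<forall>k\<in>insert a I. (w(a:=-1)) k = 1 \<or> (w(a:=-1)) k = -1" using w by auto
      from insert(4)[OF this] have "(\<Sum>T\<in>Pow I. g T * (\<Prod>k\<in>T. (w(a:=-1)) k)) + (-1) * (\<Sum>T\<in>Pow I. h T * (\<Prod>k\<in>T. (w(a:=-1)) k)) = 0"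
        unfolding split by simp
      thus ?thesis unfolding updS by simp
    qed
    from e1 e2 have "2 * ?G = 0" by (simp add: algebra_simps)
    hence g0: "?G = 0" using two by simp
    thus "?G = 0" .
    show "?H = 0" using e1 g0 by simp
  qed
  show ?case
  proof (cases "a \<in> T")
    case False
    hence "T \<in> Pow I" using insert(5) by auto
    from insert(3)[of g, OF G this] show ?thesis by (simp add: g_def)
  next
    case True
    hence "T - {a} \<in> Pow I" and "insert a (T - {a}) = T" using insert(5) by auto
    from insert(3)[of h, OF H this(1)] this(2) show ?thesis by (simp add: h_def)
  qed
qed

lemma card_subsets_le:
  assumes "finite J"
  shows "card {U. U \<subseteq> J \<and> card U \<le> d} = (\<Sum>j\<le>d. card J choose j)"
proof (induction d)
  case 0
  have "{U. U \<subseteq> J \<and> card U \<le> 0} = {U. U \<subseteq> J \<and> card U = 0}" by auto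
  then show ?case using n_subsets[OF assms, of 0] by simp
next
  case (Suc d)
  have e: "{U. U \<subseteq> J \<and> card U \<le> Suc d} = {U. U \<subseteq> J \<and> card U \<le> d} \<union> {U. U \<subseteq> J \<and> card U = Suc d}" by auto
  have f: "finite {U. U \<subseteq> J \<and> card U \<le> d}" "finite {U. U \<subseteq> J \<and> card U = Suc d}"
    using assms by (auto intro: finite_subset[of _ "Pow J"])
  show ?case unfolding e using f Suc n_subsets[OF assms, of "Suc d"]
    by (subst card_Un_disjoint) auto
qed

lemma card_subsets_lt:
  assumes "finite J"
  shows "card {U. U \<subseteq> J \<and> card U < d} = (\<Sum>j<d. card J choose j)"
proof (cases d)
  case 0 then show ?thesis by simp
next
  case (Suc d')
  have "{U. U \<subseteq> J \<and> card U < d} = {U. U \<subseteq> J \<and> card U \<le> d'}" using Suc by auto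
  then show ?thesis using card_subsets_le[OF assms, of d'] Suc by (simp add: lessThan_Suc_atMost)
qed

lemma binom_ident:
  "(\<Sum>i\<in>{0..d div 2}. (m+2) choose (d-2*i)) = (\<Sum>j\<le>d. m choose j) + (\<Sum>j<d. m choose j)"
proof (induction d rule: nat_induct2)
  case 0 then show ?case by simp
next
  case 1 then show ?case by simp
next
  case (step n)
  have "(\<Sum>i\<in>{0..(n+2) div 2}. (m+2) choose (n+2-2*i)) = (\<Sum>i\<le>Suc (n div 2). (m+2) choose (n+2-2*i))"
    by (simp add: atLeast0AtMost)
  also have "\<dots> = ((m+2) choose (n+2)) + (\<Sum>i\<le>n div 2. (m+2) choose (n+2-2*Suc i))"
    by (subst sum.atMost_Suc_shift) simp
  also have "(\<Sum>i\<le>n div 2. (m+2) choose (n+2-2*Suc i)) = (\<Sum>i\<in>{0..n div 2}. (m+2) choose (n-2*i))"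
    by (simp add: atLeast0AtMost)
  finally have L: "(\<Sum>i\<in>{0..(n+2) div 2}. (m+2) choose (n+2-2*i)) = ((m+2) choose (n+2)) + (\<Sum>i\<in>{0..n div 2}. (m+2) choose (n-2*i))" .
  have B: "(m+2) choose (n+2) = (m choose n) + 2 * (m choose (n+1)) + (m choose (n+2))"
    by (simp add: numeral_2_eq_2)
  have R: "(\<Sum>j\<le>n+2. m choose j) + (\<Sum>j<n+2. m choose j) = (\<Sum>j\<le>n. m choose j) + (\<Sum>j<n. m choose j) + ((m choose n) + 2 * (m choose (n+1)) + (m choose (n+2)))"
    by (simp add: numeral_2_eq_2 lessThan_Suc)
  show ?case unfolding L R using step B by simp
qed

lemma count_Y:
  fixes l d :: nat
  assumes "finite J" "card J = 2*l - 2" "l \<ge> 2"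
  shows "card {U. U \<subseteq> J \<and> (card U \<le> d \<or> card (J - U) < d)}
     = (if d \<ge> l - 1 then 2 ^ (2*l - 2) else (\<Sum>i\<in>{0..d div 2}. (2*l) choose (d - 2*i)))"
proof -
  have cc: "card U + card (J - U) = 2*l - 2" if "U \<subseteq> J" for U
    using that assms(1,2) by (metis card_Diff_subset card_mono finite_subset le_add_diff_inverse)
  show ?thesis
  proof (cases "d \<ge> l - 1")
    case True
    have "{U. U \<subseteq> J \<and> (card U \<le> d \<or> card (J - U) < d)} = Pow J"
    proof safe
      fix U assume "U \<subseteq> J" "\<not> card (J - U) < d"
      then show "card U \<le> d" using cc[of U] True assms(3) by linarith
    qed auto
    then show ?thesis using True card_Pow[OF assms(1)] assms(2) by simp
  next
    case False
    let ?A = "{U. U \<subseteq> J \<and> card U \<le> d}" and ?B = "{U. U \<subseteq> J \<and> card (J - U) < d}"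
    have e: "{U. U \<subseteq> J \<and> (card U \<le> d \<or> card (J - U) < d)} = ?A \<union> ?B" by auto
    have fin: "finite ?A" "finite ?B" using assms(1) by (auto intro: finite_subset[of _ "Pow J"])
    have dj: "?A \<inter> ?B = {}"
    proof safe
      fix U assume "U \<subseteq> J" "card U \<le> d" "card (J - U) < d"
      then show "U \<in> {}" using cc[of U] False assms(3) by linarith
    qed
    have bij: "bij_betw (\<lambda>U. J - U) ?B {V. V \<subseteq> J \<and> card V < d}"
      by (rule bij_betw_byWitness[where f' = "\<lambda>V. J - V"]) (auto simp: double_diff)
    have "card ?B = (\<Sum>j<d. card J choose j)"
      using bij_betw_same_card[OF bij] card_subsets_lt[OF assms(1)] by simp
    moreover have "card ?A = (\<Sum>j\<le>d. card J choose j)" using card_subsets_le[OF assms(1)] .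
    moreover have "2*l-2+2 = 2*l" using assms(3) by simp
    moreover note binom_ident[where d=d and m="2*l-2"]
    ultimately show ?thesis unfolding e using card_Un_disjoint[OF fin dj] False assms(2)
      by simp
  qed
qed

lemma card_odd_le: "finite A \<Longrightarrow> card {k\<in>A. odd (a k :: nat)} \<le> sum a A"
proof -
  assume f: "finite A"
  have "card {k\<in>A. odd (a k)} = (\<Sum>k\<in>{k\<in>A. odd (a k)}. 1)" by simp
  also have "\<dots> \<le> (\<Sum>k\<in>{k\<in>A. odd (a k)}. a k)" by (rule sum_mono) (auto intro: odd_pos simp: Suc_le_eq)
  also have "\<dots> \<le> sum a A" using f by (intro sum_mono2) auto
  finally show ?thesis .
qed

lemma finite_monomials: "finite (monomials s d)"
proof -
  have "monomials s d \<subseteq> {f. \<forall>x. (x \<in> {1..s} \<longrightarrow> f x \<in> {0..d}) \<and> (x \<notin> {1..s} \<longrightarrow> f x = 0)}"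
  proof
    fix a assume a: "a \<in> monomials s d"
    have le: "a k \<le> d" if "k \<in> {1..s}" for k
    proof -
      have "a k \<le> sum a {1..s}" using that by (intro member_le_sum) auto
      thus ?thesis using a unfolding monomials_def by simp
    qed
    show "a \<in> {f. \<forall>x. (x \<in> {1..s} \<longrightarrow> f x \<in> {0..d}) \<and> (x \<notin> {1..s} \<longrightarrow> f x = 0)}"
      using a le unfolding monomials_def by simp
  qed
  thus ?thesis by (rule finite_subset) (intro finite_set_of_finite_funs; simp)
qed

definition tau :: "nat \<Rightarrow> (nat \<Rightarrow> nat) \<Rightarrow> nat set" where
  "tau s a = {k\<in>{2..s-1}. odd (a k + a s)}"

lemma tau_image:
  assumes "s = 2*l" "l \<ge> 2"
  shows "tau s ` monomials s d = {U. U \<subseteq> {2..s-1} \<and> (card U \<le> d \<or> card ({2..s-1} - U) < d)}"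
proof (intro equalityI subsetI)
  let ?J = "{2..s-1}"
  have sJ: "s \<notin> ?J" "1 \<notin> ?J" "?J \<subseteq> {1..s}" "s \<in> {1..s}" "1 \<in> {1..s}" "s \<noteq> 1" using assms by auto
  fix U assume "U \<in> tau s ` monomials s d"
  then obtain a where a: "a \<in> monomials s d" and U: "U = tau s a" by auto
  have sum_d: "sum a {1..s} = d" using a unfolding monomials_def by auto
  have "sum a (insert s ?J) \<le> sum a {1..s}" using sJ by (intro sum_mono2) auto
  hence le: "sum a ?J + a s \<le> d" using sJ sum_d by simp
  show "U \<in> {U. U \<subseteq> ?J \<and> (card U \<le> d \<or> card (?J - U) < d)}"
  proof (cases "odd (a s)")
    case False
    hence "U = {k\<in>?J. odd (a k)}" unfolding U tau_def by auto
    thus ?thesis using card_odd_le[of ?J a] le by auto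
  next
    case True
    hence e: "?J - U = {k\<in>?J. odd (a k)}" unfolding U tau_def by auto
    moreover have "a s \<ge> 1" using True by (cases "a s") auto
    ultimately have "card (?J - U) < d" using card_odd_le[of ?J a] le by simp
    moreover have "U \<subseteq> ?J" unfolding U tau_def by auto
    ultimately show ?thesis by simp
  qed
next
  let ?J = "{2..s-1}"
  have sJ: "s \<notin> ?J" "1 \<notin> ?J" "?J \<subseteq> {1..s}" "s \<in> {1..s}" "1 \<in> {1..s}" "s \<noteq> 1" using assms by auto
  have split: "sum f {1..s} = f 1 + f s + sum f ?J" for f :: "nat \<Rightarrow> nat"
  proof -
    have "{1..s} = insert 1 (insert s ?J)" using assms by auto
    thus ?thesis using sJ by simp
  qed
  fix U assume "U \<in> {U. U \<subseteq> ?J \<and> (card U \<le> d \<or> card (?J - U) < d)}"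
  hence UJ: "U \<subseteq> ?J" and c: "card U \<le> d \<or> card (?J - U) < d" by auto
  show "U \<in> tau s ` monomials s d"
  proof (cases "card U \<le> d")
    case True
    define a where "a k = (if k \<in> U then 1 else if k = 1 then d - card U else 0)" for k
    have "sum a ?J = card U"
    proof -
      have "sum a ?J = (\<Sum>k\<in>?J. if k \<in> U then 1 else 0)" unfolding a_def using sJ by (intro sum.cong) auto
      also have "\<dots> = card U" using UJ by (simp add: sum.If_cases Int_absorb1)
      finally show ?thesis .
    qed
    moreover have "a 1 = d - card U" "a s = 0" using UJ sJ unfolding a_def by auto
    ultimately have "sum a {1..s} = d" using split[of a] True by simp
    moreover have "\<forall>k. k \<notin> {1..s} \<longrightarrow> a k = 0" using UJ sJ unfolding a_def by auto
    ultimately have "a \<in> monomials s d" unfolding monomials_def by simp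
    moreover have "tau s a = U" unfolding tau_def a_def using UJ sJ by auto
    ultimately show ?thesis by (metis image_eqI)
  next
    case False
    hence c2: "card (?J - U) < d" using c by auto
    define a where "a k = (if k \<in> ?J - U then 1 else if k = s then 1 else if k = 1 then d - 1 - card (?J - U) else 0)" for k
    have "sum a ?J = card (?J - U)"
    proof -
      have "sum a ?J = (\<Sum>k\<in>?J. if k \<in> ?J - U then 1 else 0)" unfolding a_def using sJ by (intro sum.cong) auto
      also have "\<dots> = card (?J - U)" by (simp add: sum.If_cases Int_absorb1 Diff_eq Compl_eq)
      finally show ?thesis .
    qed
    moreover have "a 1 = d - 1 - card (?J - U)" "a s = 1" using UJ sJ unfolding a_def by auto
    ultimately have "sum a {1..s} = d" using split[of a] c2 by simp
    moreover have "\<forall>k. k \<notin> {1..s} \<longrightarrow> a k = 0" using UJ sJ unfolding a_def by auto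
    ultimately have "a \<in> monomials s d" unfolding monomials_def by simp
    moreover have "tau s a = U" unfolding tau_def a_def using UJ sJ by auto
    ultimately show ?thesis by (metis image_eqI)
  qed
qed

lemma rep_class: assumes "v 1 \<noteq> (0::'k::field)"
  shows "\<exists>c. c \<noteq> 0 \<and> rep (proj_class v) = (\<lambda>k. c * v k)"
proof -
  have "v \<in> proj_class v" unfolding proj_class_def by (rule CollectI, rule exI[of _ 1]) simp
  hence "rep (proj_class v) \<in> proj_class v" unfolding rep_def by (rule someI[where P="\<lambda>p. p \<in> proj_class v"])
  thus ?thesis unfolding proj_class_def by auto
qed

definition zz :: "(nat \<Rightarrow> 'k::field) set \<Rightarrow> nat \<Rightarrow> 'k" where
  "zz P k = rep P k / rep P 1"

lemma zz_class: assumes "v 1 \<noteq> (0::'k::field)"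
  shows "zz (proj_class v) k = v k / v 1"
proof -
  obtain c where "c \<noteq> 0" "rep (proj_class v) = (\<lambda>k. c * v k)" using rep_class[of v, OF assms] by blast
  thus ?thesis unfolding zz_def by simp
qed

lemma param_cycle: "param_pt (cycle_edge s) s x k = (if k \<in> {1..s} then x k * x (if k = s then 1 else k + 1) else 0)"
  unfolding param_pt_def cycle_edge_def by simp

lemma param_nz: assumes "x \<in> torus s" "k \<in> {1..s}"
  shows "param_pt (cycle_edge s) s x k \<noteq> 0"
  using assms unfolding param_cycle torus_def by auto

lemma prod_cycle:
  assumes card3: "card (UNIV :: 'k::{field,finite} set) = 3" and x: "(x::nat\<Rightarrow>'k) \<in> torus s"
  shows "(\<Prod>k\<in>{1..s}. param_pt (cycle_edge s) s x k) = 1"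
proof -
  define \<sigma> where "\<sigma> k = (if k = s then 1 else k + 1)" for k :: nat
  have im: "\<sigma> ` {1..s} \<subseteq> {1..s}" unfolding \<sigma>_def by auto
  have inj: "inj_on \<sigma> {1..s}" unfolding \<sigma>_def inj_on_def by auto
  have "\<sigma> ` {1..s} = {1..s}" using endo_inj_surj[OF _ im inj] by simp
  hence bij: "bij_betw \<sigma> {1..s} {1..s}" using inj unfolding bij_betw_def by simp
  have "(\<Prod>k\<in>{1..s}. param_pt (cycle_edge s) s x k) = (\<Prod>k\<in>{1..s}. x k * x (\<sigma> k))"
    unfolding param_cycle \<sigma>_def by (intro prod.cong) auto
  also have "\<dots> = (\<Prod>k\<in>{1..s}. x k) * (\<Prod>k\<in>{1..s}. x (\<sigma> k))" by (rule prod.distrib)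
  also have "(\<Prod>k\<in>{1..s}. x (\<sigma> k)) = (\<Prod>k\<in>{1..s}. x k)" by (rule prod.reindex_bij_betw[OF bij])
  also have "(\<Prod>k\<in>{1..s}. x k) \<noteq> 0" using x unfolding torus_def by auto
  hence "(\<Prod>k\<in>{1..s}. x k) * (\<Prod>k\<in>{1..s}. x k) = 1" by (rule f3_sq[OF card3])
  finally show ?thesis .
qed

lemma sq_pow: assumes "u * u = (1::'k::field)" shows "u ^ n = (if even n then 1 else u)"
proof -
  have "u ^ n = u ^ (2 * (n div 2) + n mod 2)" by simp
  also have "\<dots> = (u * u) ^ (n div 2) * u ^ (n mod 2)" by (simp only: power_add power_mult power2_eq_square)
  finally show ?thesis using assms by (auto simp: odd_iff_mod_2_eq_one)
qed

lemma X3: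
  assumes card3: "card (UNIV :: 'k::{field,finite} set) = 3" and x: "(x::nat\<Rightarrow>'k) \<in> torus s"
    and s: "s = 2*l" "l \<ge> 2"
  shows "zz (proj_class (param_pt (cycle_edge s) s x)) s = (\<Prod>k\<in>{2..s-1}. zz (proj_class (param_pt (cycle_edge s) s x)) k)"
proof -
  let ?y = "param_pt (cycle_edge s) s x" and ?J = "{2..s-1}"
  have nz: "?y k \<noteq> 0" if "k \<in> {1..s}" for k using param_nz[OF x that] .
  have y1: "?y 1 \<noteq> 0" "?y s \<noteq> 0" using nz s by auto
  have sq1: "?y 1 * ?y 1 = 1" "?y s * ?y s = 1" using f3_sq[OF card3] y1 by auto
  have z: "zz (proj_class ?y) k = ?y k * ?y 1" for k
    using zz_class[of ?y, OF y1(1), of k] sq1(1) by (metis divide_eq_eq mult.assoc mult_1_right y1(1))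
  have "{1..s} = insert 1 (insert s ?J)" using s by auto
  hence "(\<Prod>k\<in>{1..s}. ?y k) = ?y 1 * (?y s * (\<Prod>k\<in>?J. ?y k))" using s by simp
  hence P: "?y 1 * (?y s * (\<Prod>k\<in>?J. ?y k)) = 1" using prod_cycle[OF card3 x] by simp
  have PJ: "(\<Prod>k\<in>?J. ?y k) = ?y 1 * ?y s"
  proof -
    have "(\<Prod>k\<in>?J. ?y k) = (?y 1 * ?y 1) * (?y s * ?y s) * (\<Prod>k\<in>?J. ?y k)" using sq1 by simp
    also have "\<dots> = (?y 1 * ?y s) * (?y 1 * (?y s * (\<Prod>k\<in>?J. ?y k)))" by (simp add: algebra_simps)
    finally show ?thesis by (simp only: P mult_1_right)
  qed
  have cJ: "card ?J = 2 * (l - 1)" using s by simp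
  have "(\<Prod>k\<in>?J. zz (proj_class ?y) k) = (\<Prod>k\<in>?J. ?y k) * ?y 1 ^ card ?J"
    unfolding z prod.distrib by simp
  also have "?y 1 ^ card ?J = 1" unfolding cJ power_mult power2_eq_square sq1 by simp
  finally show ?thesis using PJ z[of s] by (simp add: mult.commute)
qed

lemma X4:
  assumes card3: "card (UNIV :: 'k::{field,finite} set) = 3" and s: "s = 2*l" "l \<ge> 2"
    and w: "\<forall>k\<in>{2..s-1}. (w::nat\<Rightarrow>'k) k = 1 \<or> w k = -1"
  shows "\<exists>P\<in>projX s s (cycle_edge s). \<forall>k\<in>{2..s-1}. zz P k = w k"
proof -
  let ?J = "{2..s-1}"
  define yv where "yv k = (if k = 1 then 1 else if k \<in> ?J then w k else if k = s then (\<Prod>j\<in>?J. w j) else 0)" for k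
  define x where "x k = (if k \<in> {1..s} then (\<Prod>j\<in>{1..<k}. yv j) else 0)" for k
  have wnz: "w k \<noteq> 0" if "k \<in> ?J" for k using w that by (metis neg_equal_0_iff_equal zero_neq_one)
  have ynz: "yv k \<noteq> 0" if "k \<in> {1..s}" for k
    using that wnz unfolding yv_def by (auto simp: prod_zero_iff)
  have xnz: "x k \<noteq> 0" if "k \<in> {1..s}" for k
    using that ynz unfolding x_def by (auto simp: prod_zero_iff)
  have xt: "x \<in> torus s" unfolding torus_def using xnz by (auto simp: x_def)
  have par: "param_pt (cycle_edge s) s x k = yv k" if k: "k \<in> {1..s}" for k
  proof (cases "k = s")
    case False
    hence "k + 1 \<in> {1..s}" "k < s" using k by auto
    hence "x (k+1) = x k * yv k" using k unfolding x_def by (simp add: prod.atLeastLessThan_Suc)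
    hence "param_pt (cycle_edge s) s x k = (x k * x k) * yv k" using False k unfolding param_cycle by (simp add: mult.assoc)
    also have "x k * x k = 1" using f3_sq[OF card3 xnz[OF k]] .
    finally show ?thesis by simp
  next
    case True
    have "{1..<s} = insert 1 ?J" using s by auto
    hence "x s = yv 1 * (\<Prod>j\<in>?J. yv j)" unfolding x_def using s by simp
    also have "\<dots> = (\<Prod>j\<in>?J. w j)"
    proof -
      have "yv 1 = 1" unfolding yv_def by simp
      moreover have "(\<Prod>j\<in>?J. yv j) = (\<Prod>j\<in>?J. w j)" by (rule prod.cong[OF refl]) (auto simp: yv_def)
      ultimately show ?thesis by simp
    qed
    also have "\<dots> = yv s" unfolding yv_def using s by auto
    finally have "x s = yv s" .
    moreover have "x 1 = 1" unfolding x_def using s by simp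
    ultimately show ?thesis using True k unfolding param_cycle by simp
  qed
  let ?y = "param_pt (cycle_edge s) s x"
  have y1: "?y 1 = 1" using par[of 1] s unfolding yv_def by simp
  have "proj_class ?y \<in> projX s s (cycle_edge s)" unfolding projX_def using xt by blast
  moreover have "zz (proj_class ?y) k = w k" if "k \<in> ?J" for k
  proof -
    have "zz (proj_class ?y) k = ?y k / ?y 1" by (rule zz_class) (metis y1 one_neq_zero)
    also have "\<dots> = w k" using par[of k] that y1 unfolding yv_def by auto
    finally show ?thesis .
  qed
  ultimately show ?thesis by blast
qed

lemma vs: "vector_space (\<lambda>(a::'k::field) (f::'a \<Rightarrow> 'k) x. a * f x)"
  by unfold_locales (simp_all add: fun_eq_iff algebra_simps)

lemma sum_fun_apply: "(\<Sum>a\<in>A. f a) x = (\<Sum>a\<in>A. f a x)"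
  by (induct A rule: infinite_finite_induct) auto

lemma mono_div:
  assumes "r 1 \<noteq> (0::'k::field)" "a \<in> monomials s d"
  shows "(\<Prod>k\<in>{1..s}. r k ^ a k) / r 1 ^ d = (\<Prod>k\<in>{1..s}. (r k / r 1) ^ a k)"
proof -
  have "r 1 ^ d = (\<Prod>k\<in>{1..s}. r 1 ^ a k)" using assms(2) unfolding monomials_def by (auto simp: power_sum)
  thus ?thesis by (simp add: power_divide prod_dividef)
qed

lemma X_point:
  assumes "P \<in> projX s s (cycle_edge s)"
  obtains x where "x \<in> torus s" "P = proj_class (param_pt (cycle_edge s) s x)"
  using assms unfolding projX_def by auto

lemma main:
  assumes card3: "card (UNIV :: 'k::{field,finite} set) = 3" and s: "s = 2*l" "l \<ge> 2"
  shows "dimK (code s s (cycle_edge s) d :: ((nat \<Rightarrow> 'k) set \<Rightarrow> 'k) set) = card (tau s ` monomials s d)"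
proof -
  define X where "X = (projX s s (cycle_edge s) :: (nat \<Rightarrow> 'k) set set)"
  define J where "J = {2..s-1}"
  define M where "M = monomials s d"
  define mu where "mu T = (\<lambda>P. if P \<in> X then \<Prod>k\<in>T. zz P k else 0)" for T :: "nat set"
  define em where "em a = (\<lambda>P. if P \<in> X then \<Prod>k\<in>{1..s}. zz P k ^ a k else 0)" for a
  have finJ: "finite J" unfolding J_def by simp
  have finM: "finite M" unfolding M_def by (rule finite_monomials)
  have Xnz: "zz P k \<noteq> 0" if PX: "P \<in> X" and kk: "k \<in> {1..s}" for P k
  proof -
    obtain x where x: "x \<in> torus s" "P = proj_class (param_pt (cycle_edge s) s x)"
      using X_point[OF PX[unfolded X_def]] by blast
    have h1: "param_pt (cycle_edge s) s x 1 \<noteq> 0" using param_nz[OF x(1)] s by simp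
    show ?thesis unfolding x(2) zz_class[of "param_pt (cycle_edge s) s x", OF h1] using h1 param_nz[OF x(1) kk] by simp
  qed
  have X1: "zz P 1 = 1" if "P \<in> X" for P
  proof -
    have "zz P 1 \<noteq> 0" using Xnz[OF that] s by simp
    thus ?thesis unfolding zz_def by (simp split: if_splits)
  qed
  have Xs: "zz P s = (\<Prod>k\<in>J. zz P k)" if PX: "P \<in> X" for P
  proof -
    obtain x where x: "x \<in> torus s" "P = proj_class (param_pt (cycle_edge s) s x)"
      using X_point[OF PX[unfolded X_def]] by blast
    show ?thesis unfolding x(2) J_def by (rule X3[OF card3 x(1) s])
  qed
  have sq: "zz P k * zz P k = 1" if "P \<in> X" "k \<in> {1..s}" for P k
    using f3_sq[OF card3 Xnz[OF that]] .
  have em_mu: "em a = mu (tau s a)" if "a \<in> M" for a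
  proof
    fix P show "em a P = mu (tau s a) P"
    proof (cases "P \<in> X")
      case False thus ?thesis unfolding em_def mu_def by simp
    next
      case True
      have JJ: "J \<subseteq> {1..s}" "1 \<notin> J" "s \<notin> J" "s \<noteq> 1" unfolding J_def using s by auto
      have "{1..s} = insert 1 (insert s J)" unfolding J_def using s by auto
      hence "(\<Prod>k\<in>{1..s}. zz P k ^ a k) = zz P 1 ^ a 1 * (zz P s ^ a s * (\<Prod>k\<in>J. zz P k ^ a k))"
        using JJ finJ by simp
      also have "\<dots> = (\<Prod>k\<in>J. zz P k ^ a s) * (\<Prod>k\<in>J. zz P k ^ a k)"
        unfolding X1[OF True] Xs[OF True] by (simp add: prod_power_distrib)
      also have "\<dots> = (\<Prod>k\<in>J. zz P k ^ (a k + a s))"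
        by (simp add: prod.distrib[symmetric] power_add mult.commute)
      also have "\<dots> = (\<Prod>k\<in>J. if odd (a k + a s) then zz P k else 1)"
        by (rule prod.cong[OF refl]) (use sq_pow[OF sq[OF True]] JJ in auto)
      also have "\<dots> = (\<Prod>k\<in>tau s a. zz P k)"
        unfolding tau_def J_def[symmetric] using finJ by (simp add: prod.inter_filter)
      finally show ?thesis unfolding em_def mu_def using True by simp
    qed
  qed
  have rep1: "rep P 1 \<noteq> 0" if PX: "P \<in> X" for P
    using Xnz[OF PX, of 1] s unfolding zz_def by auto
  define F where "F c = (\<Sum>a\<in>M. (\<lambda>P. c a * em a P))" for c :: "(nat \<Rightarrow> nat) \<Rightarrow> 'k"
  have fc: "(\<lambda>P. if P \<in> X then eval_form s d c (rep P) / rep P 1 ^ d else 0) = F c" for c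
  proof
    fix P show "(if P \<in> X then eval_form s d c (rep P) / rep P 1 ^ d else 0) = F c P"
    proof (cases "P \<in> X")
      case False thus ?thesis unfolding F_def sum_fun_apply em_def by simp
    next
      case True
      have "eval_form s d c (rep P) / rep P 1 ^ d = (\<Sum>a\<in>M. c a * ((\<Prod>k\<in>{1..s}. rep P k ^ a k) / rep P 1 ^ d))"
        unfolding eval_form_def M_def by (simp add: sum_divide_distrib)
      also have "\<dots> = (\<Sum>a\<in>M. c a * em a P)"
        unfolding em_def zz_def using True rep1[OF True] mono_div[of "rep P"] unfolding M_def by (intro sum.cong) auto
      finally show ?thesis using True unfolding F_def sum_fun_apply by simp
    qed
  qed
  have code_eq: "code s s (cycle_edge s) d = F ` forms s d"
  proof -
    have "code s s (cycle_edge s) d = (\<lambda>c. (\<lambda>P. if P \<in> X then eval_form s d c (rep P) / rep P 1 ^ d else 0)) ` forms s d"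
      unfolding code_def X_def by (rule Setcompr_eq_image)
    also have "\<dots> = F ` forms s d" by (rule image_cong[OF refl]) (rule fc)
    finally show ?thesis .
  qed
  have cl0: "0 \<in> F ` forms s d"
  proof (rule image_eqI[where x = "\<lambda>_. 0"])
    show "0 = F (\<lambda>_. 0)" unfolding F_def by (simp add: fun_eq_iff sum_fun_apply)
    show "(\<lambda>_. 0) \<in> forms s d" unfolding forms_def by simp
  qed
  have cladd: "f + g \<in> F ` forms s d" if fg: "f \<in> F ` forms s d" "g \<in> F ` forms s d" for f g
  proof -
    obtain c c' where c: "c \<in> forms s d" "c' \<in> forms s d" "f = F c" "g = F c'" using fg by auto
    show "f + g \<in> F ` forms s d"
    proof (rule image_eqI[where x = "\<lambda>a. c a + c' a"])
      show "f + g = F (\<lambda>a. c a + c' a)" unfolding c F_def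
        by (simp add: fun_eq_iff sum_fun_apply sum.distrib[symmetric] distrib_right)
      show "(\<lambda>a. c a + c' a) \<in> forms s d" using c unfolding forms_def by auto
    qed
  qed
  have clsc: "(\<lambda>x. r * f x) \<in> F ` forms s d" if fF: "f \<in> F ` forms s d" for f r
  proof -
    obtain c where c: "c \<in> forms s d" "f = F c" using fF by auto
    show "(\<lambda>x. r * f x) \<in> F ` forms s d"
    proof (rule image_eqI[where x = "\<lambda>a. r * c a"])
      show "(\<lambda>x. r * f x) = F (\<lambda>a. r * c a)" unfolding c F_def
        by (simp add: fun_eq_iff sum_fun_apply sum_distrib_left mult.assoc)
      show "(\<lambda>a. r * c a) \<in> forms s d" using c unfolding forms_def by auto
    qed
  qed
  have emF: "em a \<in> F ` forms s d" if aM: "a \<in> M" for a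
  proof -
    have "F (\<lambda>b. if b = a then 1 else 0) = em a"
    proof
      fix x
      have "F (\<lambda>b. if b = a then 1 else 0) x = (\<Sum>b\<in>M. (if b = a then 1 else 0) * em b x)"
        unfolding F_def sum_fun_apply ..
      also have "\<dots> = (\<Sum>b\<in>M. if b = a then em b x else 0)" by (rule sum.cong) auto
      also have "\<dots> = em a x" using aM finM by (simp add: sum.delta)
      finally show "F (\<lambda>b. if b = a then 1 else 0) x = em a x" .
    qed
    moreover have "(\<lambda>b. if b = a then 1 else 0) \<in> forms s d" using aM unfolding forms_def M_def by auto
    ultimately show ?thesis by (metis image_eqI)
  qed
  have trans: "\<exists>P\<in>X. \<forall>T\<in>Pow J. mu T P = (\<Prod>k\<in>T. w k)" if w: "\<forall>k\<in>J. w k = 1 \<or> w k = -1" for w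
  proof -
    obtain P where P: "P \<in> X" "\<forall>k\<in>J. zz P k = w k"
      using X4[OF card3 s w[unfolded J_def]] unfolding X_def J_def by blast
    have "mu T P = (\<Prod>k\<in>T. w k)" if "T \<in> Pow J" for T
      unfolding mu_def using P that by (auto intro!: prod.cong)
    thus ?thesis using P(1) by blast
  qed
  have indep_c: "c T = 0" if h: "\<And>P. (\<Sum>T\<in>Pow J. c T * mu T P) = 0" and T: "T \<in> Pow J" for c T
  proof (rule cube_indep[OF finJ f3_two[OF card3] _ T])
    fix w :: "nat \<Rightarrow> 'k" assume w: "\<forall>k\<in>J. w k = 1 \<or> w k = -1"
    obtain P where P: "\<forall>T\<in>Pow J. mu T P = (\<Prod>k\<in>T. w k)" using trans[OF w] by blast
    have "(\<Sum>T\<in>Pow J. c T * (\<Prod>k\<in>T. w k)) = (\<Sum>T\<in>Pow J. c T * mu T P)"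
      using P by (intro sum.cong) auto
    also have "\<dots> = 0" by (rule h)
    finally show "(\<Sum>T\<in>Pow J. c T * (\<Prod>k\<in>T. w k)) = 0" .
  qed
  have inj: "inj_on mu (Pow J)"
  proof (rule inj_onI, rule ccontr)
    fix T1 T2 assume T: "T1 \<in> Pow J" "T2 \<in> Pow J" "mu T1 = mu T2" "T1 \<noteq> T2"
    define c where "c T = (if T = T1 then 1 else 0) - (if T = T2 then (1::'k) else 0)" for T
    have "(\<Sum>T\<in>Pow J. c T * mu T P) = 0" for P
    proof -
      have "(\<Sum>T\<in>Pow J. c T * mu T P) = (\<Sum>T\<in>Pow J. (if T = T1 then mu T P else 0) - (if T = T2 then mu T P else 0))"
        unfolding c_def by (intro sum.cong) auto
      also have "\<dots> = mu T1 P - mu T2 P" using T finJ by (simp add: sum_subtractf sum.delta)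
      finally show ?thesis using T(3) by simp
    qed
    from indep_c[OF this T(1)] show False using T(4) unfolding c_def by simp
  qed
  interpret V: vector_space "(\<lambda>a f x. a * f x) :: 'k \<Rightarrow> ((nat \<Rightarrow> 'k) set \<Rightarrow> 'k) \<Rightarrow> ((nat \<Rightarrow> 'k) set \<Rightarrow> 'k)"
    by (rule vs)
  have sub: "V.subspace (F ` forms s d)"
    unfolding V.subspace_def using cl0 cladd clsc by blast
  have span_eq: "F ` forms s d = V.span (em ` M)"
  proof
    show "V.span (em ` M) \<subseteq> F ` forms s d" using V.span_minimal[OF _ sub] emF by blast
    show "F ` forms s d \<subseteq> V.span (em ` M)"
    proof
      fix f assume "f \<in> F ` forms s d"
      then obtain c where c: "f = F c" by auto
      show "f \<in> V.span (em ` M)" unfolding c F_def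
        by (intro V.span_sum) (metis V.span_scale V.span_base imageI)
    qed
  qed
  have em_img: "em ` M = mu ` (tau s ` M)"
    unfolding image_image using em_mu by (intro image_cong) auto
  have indep: "V.independent (mu ` Pow J)"
  proof (rule V.independent_if_scalars_zero)
    show "finite (mu ` Pow J)" using finJ by simp
    fix f x assume h: "(\<Sum>x\<in>mu ` Pow J. (\<lambda>P. f x * x P)) = 0" and x: "x \<in> mu ` Pow J"
    obtain T where T: "T \<in> Pow J" "x = mu T" using x by auto
    have "(\<Sum>T\<in>Pow J. (\<lambda>P. f (mu T) * mu T P)) = 0" using h unfolding sum.reindex[OF inj] comp_def .
    hence "(\<Sum>T\<in>Pow J. f (mu T) * mu T P) = 0" for P
      using fun_cong[of _ _ P] unfolding sum_fun_apply zero_fun_apply by blast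
    from indep_c[of "\<lambda>T. f (mu T)", OF this T(1)] show "f x = 0" using T(2) by simp
  qed
  have tauJ: "tau s ` M \<subseteq> Pow J" unfolding tau_def J_def by auto
  have "dimK (code s s (cycle_edge s) d :: ((nat \<Rightarrow> 'k) set \<Rightarrow> 'k) set) = V.dim (V.span (mu ` (tau s ` M)))"
    unfolding dimK_def code_eq span_eq em_img ..
  also have "\<dots> = card (mu ` (tau s ` M))"
    by (rule V.dim_span_eq_card_independent[OF V.independent_mono[OF indep]]) (use tauJ in blast)
  also have "\<dots> = card (tau s ` M)" by (rule card_image[OF inj_on_subset[OF inj tauJ]])
  finally show ?thesis unfolding M_def .
qed

theorem theorem2p5:
  fixes l d :: nat
  assumes "card (UNIV :: 'k set) = 3"
    and "l \<ge> 2"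
  shows "dimK (code (2*l) (2*l) (cycle_edge (2*l)) d :: ((nat \<Rightarrow> 'k::{field,finite}) set \<Rightarrow> 'k) set)
           = (if d \<ge> l - 1 then 2 ^ (2*l - 2)
              else (\<Sum>i\<in>{0..d div 2}. (2*l) choose (d - 2*i)))"
proof -
  have "dimK (code (2*l) (2*l) (cycle_edge (2*l)) d :: ((nat \<Rightarrow> 'k) set \<Rightarrow> 'k) set)
      = card (tau (2*l) ` monomials (2*l) d)"
    by (rule main[OF assms(1) refl assms(2)])
  also have "\<dots> = card {U. U \<subseteq> {2..2*l-1} \<and> (card U \<le> d \<or> card ({2..2*l-1} - U) < d)}"
    unfolding tau_image[OF refl assms(2)] ..
  also have "\<dots> = (if d \<ge> l - 1 then 2 ^ (2*l - 2) else (\<Sum>i\<in>{0..d div 2}. (2*l) choose (d - 2*i)))"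
    by (rule count_Y) (use assms(2) in auto)
  finally show ?thesis .
qed

end
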